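(* Let $n$ be a non-negative integer, let $x\neq 1$ be a complex number, and let $r$ be a complex number that is not a negative integer. Then $$\sum_{k = 1}^n \sum_{j = 0}^{k - 1} \frac{x^{n-j}}{k - j + r} = \frac{1}{1-x} \left(\sum_{k=1}^n \frac{x^k}{k+r} - x^{n+1}(H_{n+r} - H_r) \right).$$ In particular, $$\sum_{k = 1}^n \sum_{j = 0}^{k - 1} \frac{x^{n-j}}{k - j} = \frac{1}{1-x} \left( \sum_{k=1}^n \frac{x^k}{k} - x^{n+1} H_n \right)$$ and $$\sum_{k = 1}^n \sum_{j = 0}^{k - 1} \frac{x^{n-j}}{2k - 2j - 1} = \frac{1}{1-x} \left( \sum_{k=1}^n \frac{x^k}{2k-1} - x^{n+1} O_n \right).$$
   Context: For a complex number $z$ that is not a negative integer, $H_z=\sum_{m=1}^\infty\left(\frac1m-\frac1{m+z}\right)$ (so $H_0=0$ and $H_n=\sum_{m=1}^n\frac1m$ for non-negative integers $n$). $O_n=\sum_{m=1}^n\frac1{2m-1}$ is the odd harmonic number. Empty sums are zero. *)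

theory Defs
  imports Complex_Main
begin

definition gen_harm :: "complex \<Rightarrow> complex" where
  "gen_harm z = (\<Sum>m. 1 / of_nat (Suc m) - 1 / (of_nat (Suc m) + z))"

definition odd_harm :: "nat \<Rightarrow> complex" where
  "odd_harm n = (\<Sum>m=1..n. 1 / (2 * of_nat m - 1))"

end

theory Submission
  imports Defs "HOL-Analysis.Analysis"
begin

lemma gh_summable: "summable (\<lambda>m. 1 / of_nat (Suc m) - 1 / (of_nat (Suc m) + (z::complex)))"
proof (cases "z = 0")
  case True then show ?thesis by simp
next
  case False
  from summable_deriv_ln_Gamma[OF False] show ?thesis
    by (simp add: divide_inverse add.commute)
qed

lemma gh_step: "gen_harm (z + 1) - gen_harm z = 1 / (z + 1)"
proof -
  define g where "g m = 1 / (of_nat (Suc m) + z)" for m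
  have l0: "(\<lambda>m. inverse (z + of_nat m)) \<longlonglongrightarrow> 0"
    by (intro filterlim_compose[OF tendsto_inverse_0]
              tendsto_add_filterlim_at_infinity[OF tendsto_const] tendsto_of_nat)
  have lim: "(\<lambda>m. g m) \<longlonglongrightarrow> 0"
    using LIMSEQ_Suc[OF l0] unfolding g_def by (simp add: divide_inverse add.commute)
  have "(\<lambda>m. g (Suc m) - g m) sums (0 - g 0)"
    by (rule telescope_sums[OF lim])
  hence s: "(\<lambda>m. g m - g (Suc m)) sums g 0"
    using sums_minus by fastforce
  have "gen_harm (z + 1) - gen_harm z =
     (\<Sum>m. (1 / of_nat (Suc m) - 1 / (of_nat (Suc m) + (z+1))) - (1 / of_nat (Suc m) - 1 / (of_nat (Suc m) + z)))"
    unfolding gen_harm_def by (rule suminf_diff; rule gh_summable)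
  also have "\<dots> = (\<Sum>m. g m - g (Suc m))"
    by (rule arg_cong[where f=suminf], rule ext) (simp add: g_def algebra_simps)
  also have "\<dots> = g 0" using s sums_unique by metis
  finally show ?thesis by (simp add: g_def add.commute)
qed

lemma gh_sum: "gen_harm (of_nat n + r) - gen_harm r = (\<Sum>i=1..n. 1 / (of_nat i + r))"
proof (induction n)
  case 0 then show ?case by simp
next
  case (Suc n)
  have "gen_harm (of_nat (Suc n) + r) = gen_harm ((of_nat n + r) + 1)" by (simp add: algebra_simps)
  also have "\<dots> = gen_harm (of_nat n + r) + 1 / (of_nat n + r + 1)" using gh_step[of "of_nat n + r"] by (simp add: diff_eq_eq add.commute)
  finally show ?case using Suc by (simp add: algebra_simps)
qed

lemma gh0: "gen_harm 0 = 0" unfolding gen_harm_def by simp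

lemma main_fin:
  fixes x :: complex and f :: "nat \<Rightarrow> complex"
  shows "(1 - x) * (\<Sum>k=1..n. \<Sum>j<k. x ^ (n - j) * f (k - j))
     = (\<Sum>k=1..n. x ^ k * f k) - x ^ (n + 1) * (\<Sum>k=1..n. f k)"
proof (induction n)
  case 0 then show ?case by simp
next
  case (Suc n)
  have key: "\<And>S S1 A A1 B B1 c::complex. S1 = x*S + A1 \<Longrightarrow> A1 = A + x^Suc n * c \<Longrightarrow> B1 = B + c
     \<Longrightarrow> (1-x)*S = A - x^(n+1)*B \<Longrightarrow> (1-x)*S1 = A1 - x^(Suc n+1)*B1"
  proof -
    fix S S1 A A1 B B1 c :: complex
    assume h: "S1 = x*S + A1" "A1 = A + x^Suc n * c" "B1 = B + c" "(1-x)*S = A - x^(n+1)*B"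
    have "(1-x)*S1 = x*((1-x)*S) + (1-x)*A1" using h(1) by (simp add: algebra_simps)
    also have "\<dots> = x*(A - x^(n+1)*B) + (1-x)*(A + x^Suc n * c)" using h(2,4) by simp
    also have "\<dots> = A1 - x^(Suc n+1)*B1" using h(2,3) by (simp add: algebra_simps)
    finally show "(1-x)*S1 = A1 - x^(Suc n+1)*B1" .
  qed
  have A: "(\<Sum>j<Suc n. x ^ (Suc n - j) * f (Suc n - j)) = (\<Sum>i=1..Suc n. x ^ i * f i)"
  proof -
    have "(\<Sum>j<Suc n. x ^ (Suc n - j) * f (Suc n - j)) = (\<Sum>i\<in>(\<lambda>j. Suc n - j) ` {..<Suc n}. x ^ i * f i)"
      by (subst sum.reindex) (auto simp: inj_on_def)
    also have "(\<lambda>j. Suc n - j) ` {..<Suc n} = {1..Suc n}"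
    proof (intro equalityI subsetI)
      fix i assume "i \<in> {1..Suc n}"
      hence "i = Suc n - (Suc n - i)" "Suc n - i \<in> {..<Suc n}" by auto
      thus "i \<in> (\<lambda>j. Suc n - j) ` {..<Suc n}" by blast
    qed auto
    finally show ?thesis .
  qed
  have B: "(\<Sum>k=1..n. \<Sum>j<k. x ^ (Suc n - j) * f (k - j)) = x * (\<Sum>k=1..n. \<Sum>j<k. x ^ (n - j) * f (k - j))"
    by (simp add: sum_distrib_left mult.assoc Suc_diff_le)
  have "(\<Sum>k=1..Suc n. \<Sum>j<k. x ^ (Suc n - j) * f (k - j)) =
        x * (\<Sum>k=1..n. \<Sum>j<k. x ^ (n - j) * f (k - j)) + (\<Sum>i=1..Suc n. x ^ i * f i)"
    using A B by simp
  moreover have "(\<Sum>i=1..Suc n. x ^ i * f i) = (\<Sum>i=1..n. x ^ i * f i) + x ^ Suc n * f (Suc n)"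
    by simp
  moreover have "(\<Sum>i=1..Suc n. f i) = (\<Sum>i=1..n. f i) + f (Suc n)"
    by simp
  ultimately show ?case using Suc key by blast
qed

lemma main_div:
  fixes x :: complex and f :: "nat \<Rightarrow> complex" and g :: "nat \<Rightarrow> nat \<Rightarrow> complex"
  assumes "x \<noteq> 1" and "\<And>k j. j < k \<Longrightarrow> g k j = f (k - j)"
  shows "(\<Sum>k=1..n. \<Sum>j<k. x ^ (n - j) * g k j)
     = 1 / (1 - x) * ((\<Sum>k=1..n. x ^ k * f k) - x ^ (n + 1) * (\<Sum>k=1..n. f k))"
proof -
  have "(\<Sum>k=1..n. \<Sum>j<k. x ^ (n - j) * g k j) = (\<Sum>k=1..n. \<Sum>j<k. x ^ (n - j) * f (k - j))"
    using assms(2) by (intro sum.cong refl) auto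
  moreover have "1 - x \<noteq> 0" using assms(1) by simp
  ultimately show ?thesis using main_fin[of x n f] by (simp add: field_simps)
qed

theorem proposition8:
  fixes n :: nat and x r :: complex
  assumes "x \<noteq> 1"
    and "\<And>m::nat. m > 0 \<Longrightarrow> r \<noteq> - of_nat m"
  shows "((\<Sum>k=1..n. \<Sum>j<k. x ^ (n - j) / (of_nat k - of_nat j + r))
           = 1 / (1 - x) * ((\<Sum>k=1..n. x ^ k / (of_nat k + r))
               - x ^ (n + 1) * (gen_harm (of_nat n + r) - gen_harm r)))
       \<and> ((\<Sum>k=1..n. \<Sum>j<k. x ^ (n - j) / (of_nat k - of_nat j))
           = 1 / (1 - x) * ((\<Sum>k=1..n. x ^ k / of_nat k) - x ^ (n + 1) * gen_harm (of_nat n)))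
       \<and> ((\<Sum>k=1..n. \<Sum>j<k. x ^ (n - j) / (2 * of_nat k - 2 * of_nat j - 1))
           = 1 / (1 - x) * ((\<Sum>k=1..n. x ^ k / (2 * of_nat k - 1)) - x ^ (n + 1) * odd_harm n))"
proof (intro conjI)
  show "(\<Sum>k=1..n. \<Sum>j<k. x ^ (n - j) / (of_nat k - of_nat j + r))
           = 1 / (1 - x) * ((\<Sum>k=1..n. x ^ k / (of_nat k + r))
               - x ^ (n + 1) * (gen_harm (of_nat n + r) - gen_harm r))"
    using main_div[OF assms(1), of "\<lambda>k j. 1 / (of_nat k - of_nat j + r)" "\<lambda>i. 1 / (of_nat i + r)" n]
    by (simp add: gh_sum of_nat_diff divide_inverse)
  show "(\<Sum>k=1..n. \<Sum>j<k. x ^ (n - j) / (of_nat k - of_nat j))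
           = 1 / (1 - x) * ((\<Sum>k=1..n. x ^ k / of_nat k) - x ^ (n + 1) * gen_harm (of_nat n))"
    using main_div[OF assms(1), of "\<lambda>k j. 1 / (of_nat k - of_nat j)" "\<lambda>i. 1 / (of_nat i)" n]
      gh_sum[of n 0]
    by (simp add: gh0 of_nat_diff divide_inverse)
  show "(\<Sum>k=1..n. \<Sum>j<k. x ^ (n - j) / (2 * of_nat k - 2 * of_nat j - 1))
           = 1 / (1 - x) * ((\<Sum>k=1..n. x ^ k / (2 * of_nat k - 1)) - x ^ (n + 1) * odd_harm n)"
    using main_div[OF assms(1), of "\<lambda>k j. 1 / (2 * of_nat k - 2 * of_nat j - 1)" "\<lambda>i. 1 / (2 * of_nat i - 1)" n]
    by (simp add: odd_harm_def of_nat_diff divide_inverse right_diff_distrib)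
qed

end
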